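(* Let $n\ge4$, $l\in[n]$, $I\subseteq[n]$, $J=[n]\setminus I$ and $r=|I|$. Then the exponent of $A_l$ in $$\mathrm{lm}_\preceq\Big(\prod_{\substack{j\in J\\ i\in[n]\setminus\{j\}}}[\alpha_i,\alpha_j]\cdot\prod_{\substack{i\in I\\ m\in[n-2]}}[\beta_m,\alpha_i]\Big)$$ equals $$\begin{cases}n-2 & (l\in I)\\ n-l & (l\in J)\end{cases}\;-\;\begin{cases}l & (l+1\in J)\\ 0 & (\text{otherwise, i.e. } l+1\in I \text{ or } l=n)\end{cases}\;+\;\begin{cases}n-r-2\,|J\cap[l]| & (l\le n-1)\\ -r & (l=n).\end{cases}$$
   Context: Let $k$ be a field of characteristic zero; $[N]=\{1,\dots,N\}$. Symbols are pairs of independent indeterminates $\sigma=(\sigma_0,\sigma_1)$; the bracket is $[\sigma,\tau]:=\sigma_0\tau_1-\tau_0\sigma_1$. Fix $n\ge4$ and symbols $\alpha_1,\dots,\alpha_n,\beta_1,\dots,\beta_{n-2}$, and let $G$ be the $k$-algebra generated by all their brackets. Define $A_i=[\beta_{n-2},\alpha_i]$ ($1\le i\le n$), $B_i=[\beta_{n-2},\beta_i]$ ($1\le i\le n-3$), $C_i=[\alpha_i,\alpha_{i+1}]$ ($1\le i\le n-1$), $C_n=[\alpha_n,\beta_1]$, $D_i=[\beta_i,\beta_{i+1}]$ ($1\le i\le n-4$). These are algebraically independent and (Laurent phenomenon) $G\subset L=k[A_i,B_i,C_i,D_i,A_2^{-1},\dots,A_n^{-1},B_1^{-1},\dots,B_{n-4}^{-1}]$.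 The order $\preceq$ on Laurent monomials of $L$ is lexicographic on exponent vectors with variables ordered from largest to smallest as $(A_1,\dots,A_n,B_1,\dots,B_{n-3},C_1,\dots,C_n,D_1,\dots,D_{n-4})$; $\mathrm{lm}_\preceq(f)$ is the $\preceq$-largest Laurent monomial occurring in $f\ne0$. *)

theory Defs
  imports Complex_Main
begin

definition br :: "'k::field \<times> 'k \<Rightarrow> 'k \<times> 'k \<Rightarrow> 'k" where
  "br s t = fst s * snd t - fst t * snd s"

datatype var = VA nat | VB nat | VC nat | VD nat

text \<open>Variables listed from largest to smallest:
  A_1..A_n, B_1..B_(n-3), C_1..C_n, D_1..D_(n-4).\<close>
definition vars :: "nat \<Rightarrow> var list" where
  "vars n = map VA [1..<n+1] @ map VB [1..<n-2] @ map VC [1..<n+1] @ map VD [1..<n-3]"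

definition inv_ok :: "nat \<Rightarrow> var \<Rightarrow> bool" where
  "inv_ok n v = (case v of VA i \<Rightarrow> 2 \<le> i \<and> i \<le> n | VB i \<Rightarrow> 1 \<le> i \<and> i + 4 \<le> n | _ \<Rightarrow> False)"

definition varval :: "nat \<Rightarrow> (nat \<Rightarrow> 'k::field \<times> 'k) \<Rightarrow> (nat \<Rightarrow> 'k \<times> 'k) \<Rightarrow> var \<Rightarrow> 'k" where
  "varval n \<alpha> \<beta> v = (case v of
      VA i \<Rightarrow> br (\<beta> (n-2)) (\<alpha> i)
    | VB i \<Rightarrow> br (\<beta> (n-2)) (\<beta> i)
    | VC i \<Rightarrow> (if i < n then br (\<alpha> i) (\<alpha> (i+1)) else br (\<alpha> n) (\<beta> 1))
    | VD i \<Rightarrow> br (\<beta> i) (\<beta> (i+1)))"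

definition is_laurent :: "nat \<Rightarrow> ((var \<Rightarrow> int) \<Rightarrow> 'k::field) \<Rightarrow> bool" where
  "is_laurent n P \<longleftrightarrow> finite {e. P e \<noteq> 0} \<and>
     (\<forall>e. P e \<noteq> 0 \<longrightarrow> (\<forall>v. v \<notin> set (vars n) \<longrightarrow> e v = 0) \<and> (\<forall>v. e v < 0 \<longrightarrow> inv_ok n v))"

definition lev :: "nat \<Rightarrow> ((var \<Rightarrow> int) \<Rightarrow> 'k::field) \<Rightarrow> (nat \<Rightarrow> 'k \<times> 'k) \<Rightarrow> (nat \<Rightarrow> 'k \<times> 'k) \<Rightarrow> 'k" where
  "lev n P \<alpha> \<beta> = (\<Sum>e\<in>{e. P e \<noteq> 0}. P e * (\<Prod>v\<in>set (vars n). varval n \<alpha> \<beta> v powi e v))"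

text \<open>Since k is infinite and the variables are algebraically independent,
  this is equivalent to the identity f = P(A,B,C,D) in the fraction field.\<close>
definition represents :: "nat \<Rightarrow> ((var \<Rightarrow> int) \<Rightarrow> 'k::field) \<Rightarrow>
    ((nat \<Rightarrow> 'k \<times> 'k) \<Rightarrow> (nat \<Rightarrow> 'k \<times> 'k) \<Rightarrow> 'k) \<Rightarrow> bool" where
  "represents n P f \<longleftrightarrow> (\<forall>\<alpha> \<beta>. (\<forall>v\<in>set (vars n). inv_ok n v \<longrightarrow> varval n \<alpha> \<beta> v \<noteq> 0)
       \<longrightarrow> f \<alpha> \<beta> = lev n P \<alpha> \<beta>)"

definition lex_less :: "nat \<Rightarrow> (var \<Rightarrow> int) \<Rightarrow> (var \<Rightarrow> int) \<Rightarrow> bool" where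
  "lex_less n e e' \<longleftrightarrow> (\<exists>k < length (vars n).
      (\<forall>j<k. e (vars n ! j) = e' (vars n ! j)) \<and> e (vars n ! k) < e' (vars n ! k))"

definition lm :: "nat \<Rightarrow> ((var \<Rightarrow> int) \<Rightarrow> 'k::field) \<Rightarrow> var \<Rightarrow> int" where
  "lm n P = (THE e. P e \<noteq> 0 \<and> (\<forall>e'. P e' \<noteq> 0 \<longrightarrow> e' \<noteq> e \<longrightarrow> lex_less n e' e))"

end

theory Submission
  imports Defs "HOL-Computational_Algebra.Polynomial"
begin

definition laur_lt :: "int \<Rightarrow> ('k::field \<Rightarrow> 'k) \<Rightarrow> bool" where
  "laur_lt D h \<longleftrightarrow> (\<exists>xs. (\<forall>p\<in>set xs. snd p < D) \<and>
      (\<forall>s. s \<noteq> 0 \<longrightarrow> h s = (\<Sum>p\<leftarrow>xs. fst p * s powi snd p)))"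

definition ltop :: "'k::field \<Rightarrow> int \<Rightarrow> ('k \<Rightarrow> 'k) \<Rightarrow> bool" where
  "ltop c D h \<longleftrightarrow> c \<noteq> 0 \<and> laur_lt D (\<lambda>s. h s - c * s powi D)"

lemma laur_lt_mono: "laur_lt D h \<Longrightarrow> D \<le> D' \<Longrightarrow> laur_lt D' h"
  unfolding laur_lt_def by (meson order_less_le_trans)

lemma laur_lt_cong: "laur_lt D g \<Longrightarrow> (\<And>s. s \<noteq> 0 \<Longrightarrow> h s = g s) \<Longrightarrow> laur_lt D h"
  unfolding laur_lt_def by metis

lemma laur_lt_zero: "laur_lt D (\<lambda>s. 0)"
  unfolding laur_lt_def by (rule exI[of _ "[]"]) simp

lemma laur_lt_monom: "laur_lt (D+1) (\<lambda>s. c * s powi D)"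
  unfolding laur_lt_def by (rule exI[of _ "[(c,D)]"]) simp

lemma laur_lt_add: "laur_lt D h \<Longrightarrow> laur_lt D g \<Longrightarrow> laur_lt D (\<lambda>s. h s + g s)"
  unfolding laur_lt_def
proof (elim exE conjE)
  fix xs ys assume "\<forall>p\<in>set xs. snd p < D" "\<forall>s. s \<noteq> 0 \<longrightarrow> h s = (\<Sum>p\<leftarrow>xs. fst p * s powi snd p)"
    "\<forall>p\<in>set ys. snd p < D" "\<forall>s. s \<noteq> 0 \<longrightarrow> g s = (\<Sum>p\<leftarrow>ys. fst p * s powi snd p)"
  thus "\<exists>zs. (\<forall>p\<in>set zs. snd p < D) \<and> (\<forall>s. s \<noteq> 0 \<longrightarrow> h s + g s = (\<Sum>p\<leftarrow>zs. fst p * s powi snd p))"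
    by (intro exI[of _ "xs @ ys"]) auto
qed

lemma laur_lt_scale: "laur_lt D h \<Longrightarrow> laur_lt (D+E) (\<lambda>s. c * s powi E * h s)"
  unfolding laur_lt_def
proof (elim exE conjE)
  fix xs assume a: "\<forall>p\<in>set xs. snd p < D" "\<forall>s. s \<noteq> 0 \<longrightarrow> h s = (\<Sum>p\<leftarrow>xs. fst p * s powi snd p)"
  show "\<exists>zs. (\<forall>p\<in>set zs. snd p < D + E) \<and> (\<forall>s. s \<noteq> 0 \<longrightarrow> c * s powi E * h s = (\<Sum>p\<leftarrow>zs. fst p * s powi snd p))"
  proof (intro exI[of _ "map (\<lambda>p. (c * fst p, E + snd p)) xs"] conjI allI impI)
    show "\<forall>p\<in>set (map (\<lambda>p. (c * fst p, E + snd p)) xs). snd p < D + E" using a(1) by auto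
    fix s :: 'a assume s: "s \<noteq> 0"
    have "c * s powi E * h s = c * s powi E * (\<Sum>p\<leftarrow>xs. fst p * s powi snd p)" using a(2) s by simp
    also have "\<dots> = (\<Sum>p\<leftarrow>xs. c * s powi E * (fst p * s powi snd p))"
      by (simp add: sum_list_const_mult)
    also have "\<dots> = (\<Sum>p\<leftarrow>map (\<lambda>p. (c * fst p, E + snd p)) xs. fst p * s powi snd p)"
      by (simp add: o_def power_int_add s mult_ac)
    finally show "c * s powi E * h s = (\<Sum>p\<leftarrow>map (\<lambda>p. (c * fst p, E + snd p)) xs. fst p * s powi snd p)" .
  qed
qed

lemma laur_lt_cmult: "laur_lt D h \<Longrightarrow> laur_lt D (\<lambda>s. c * h s)"
  using laur_lt_scale[of D h 0 c] by simp

lemma laur_lt_neg: "laur_lt D h \<Longrightarrow> laur_lt D (\<lambda>s. - h s)"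
  using laur_lt_cmult[of D h "-1"] by simp

lemma laur_lt_diff: "laur_lt D h \<Longrightarrow> laur_lt D g \<Longrightarrow> laur_lt D (\<lambda>s. h s - g s)"
  using laur_lt_add[of D h "\<lambda>s. - g s"] laur_lt_neg[of D g] by simp

lemma laur_lt_mult: "laur_lt D h \<Longrightarrow> laur_lt E g \<Longrightarrow> laur_lt (D+E-1) (\<lambda>s. h s * g s)"
proof -
  assume "laur_lt D h" "laur_lt E g"
  then obtain xs ys where a: "\<forall>p\<in>set xs. snd p < D" "\<forall>s. s \<noteq> 0 \<longrightarrow> h s = (\<Sum>p\<leftarrow>xs. fst p * s powi snd p)"
    and b: "\<forall>p\<in>set ys. snd p < E" "\<forall>s. s \<noteq> 0 \<longrightarrow> g s = (\<Sum>p\<leftarrow>ys. fst p * s powi snd p)"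
    unfolding laur_lt_def by blast
  have "laur_lt (D+E-1) (\<lambda>s. (\<Sum>p\<leftarrow>xs. fst p * s powi snd p) * g s)"
    using a(1)
  proof (induction xs)
    case Nil then show ?case by (simp add: laur_lt_zero)
  next
    case (Cons p xs)
    have "laur_lt (E + snd p) (\<lambda>s. fst p * s powi snd p * g s)"
      using laur_lt_scale[of E g "snd p" "fst p"] `laur_lt E g` by (simp add: add.commute)
    hence "laur_lt (D+E-1) (\<lambda>s. fst p * s powi snd p * g s)"
      by (rule laur_lt_mono) (use Cons.prems in auto)
    from laur_lt_add[OF this Cons.IH] Cons.prems show ?case
      by (simp add: distrib_right)
  qed
  thus ?thesis by (rule laur_lt_cong) (use a(2) in auto)
qed

lemma top_laur_lt: "ltop c D h \<Longrightarrow> laur_lt (D+1) h"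
  unfolding ltop_def using laur_lt_add[of "D+1" "\<lambda>s. h s - c * s powi D" "\<lambda>s. c * s powi D"]
    laur_lt_mono[of D] laur_lt_monom[of D c] by force

lemma poly_sum_list_map: "poly (\<Sum>q\<leftarrow>ps. f q) x = (\<Sum>q\<leftarrow>ps. poly (f q) x)"
  by (induction ps) auto

lemma sum_list_coeff: "coeff (\<Sum>q\<leftarrow>ps. f q) k = (\<Sum>q\<leftarrow>ps. coeff (f q) k)"
  by (induction ps) auto

lemma identity:
  fixes c :: "'k::field_char_0"
  assumes "\<forall>p\<in>set xs. snd p < D" and "\<And>s. s \<noteq> 0 \<Longrightarrow> c * s powi D = (\<Sum>p\<leftarrow>xs. fst p * s powi snd p)"
  shows "c = 0"
proof -
  define m where "m = Min (insert D (snd ` set xs))"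
  have mD: "m \<le> D" and mx: "\<And>p. p \<in> set xs \<Longrightarrow> m \<le> snd p" unfolding m_def by auto
  define p where "p = monom c (nat (D - m)) - (\<Sum>q\<leftarrow>xs. monom (fst q) (nat (snd q - m)))"
  have "poly p s = 0" if s: "s \<noteq> 0" for s
  proof -
    have e: "s powi d = s ^ nat (d - m) * s powi m" if "m \<le> d" for d
    proof -
      have "d = int (nat (d - m)) + m" using that by simp
      hence "s powi d = s powi (int (nat (d - m)) + m)" by simp
      also have "\<dots> = s powi int (nat (d - m)) * s powi m" using s by (rule power_int_add[OF disjI1])
      finally show ?thesis by (simp only: power_int_of_nat)
    qed
    have "poly p s = c * s ^ nat (D - m) - (\<Sum>q\<leftarrow>xs. fst q * s ^ nat (snd q - m))"
      unfolding p_def by (simp only: poly_diff poly_sum_list_map poly_monom)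
    moreover have "c * s ^ nat (D - m) * s powi m = (\<Sum>q\<leftarrow>xs. fst q * s ^ nat (snd q - m)) * s powi m"
    proof -
      have "c * s ^ nat (D - m) * s powi m = c * s powi D" using e[OF mD] by (simp add: mult.assoc)
      also have "\<dots> = (\<Sum>q\<leftarrow>xs. fst q * s powi snd q)" using assms(2) s by simp
      also have "\<dots> = (\<Sum>q\<leftarrow>xs. fst q * s ^ nat (snd q - m) * s powi m)"
        by (intro arg_cong[where f=sum_list] map_cong refl) (use e[OF mx] in \<open>simp add: mult.assoc\<close>)
      also have "\<dots> = (\<Sum>q\<leftarrow>xs. fst q * s ^ nat (snd q - m)) * s powi m"
        by (simp add: sum_list_mult_const)
      finally show ?thesis .
    qed
    ultimately show ?thesis using s by simp
  qed
  hence "p = 0"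
  proof -
    assume z: "\<And>s. s \<noteq> 0 \<Longrightarrow> poly p s = 0"
    show "p = 0"
    proof (rule ccontr)
      assume "p \<noteq> 0"
      hence "finite {x. poly p x = 0}" by (rule poly_roots_finite)
      moreover have "UNIV - {0} \<subseteq> {x. poly p x = 0}" using z by auto
      ultimately have "finite (UNIV - {0::'k})" by (rule rev_finite_subset)
      thus False using infinite_UNIV_char_0[where 'a='k] by simp
    qed
  qed
  hence "coeff p (nat (D - m)) = 0" by simp
  moreover have "coeff p (nat (D - m)) = c"
  proof -
    have "(\<Sum>q\<leftarrow>xs. coeff (monom (fst q) (nat (snd q - m))) (nat (D - m))) = (\<Sum>q\<leftarrow>xs. 0)"
      by (intro arg_cong[where f=sum_list] map_cong refl)
         (use assms(1) mx in \<open>force simp: coeff_monom\<close>)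
    thus ?thesis unfolding p_def by (simp add: coeff_diff sum_list_coeff)
  qed
  ultimately show ?thesis by simp
qed

lemma top_not_lt: fixes h :: "'k::field_char_0 \<Rightarrow> 'k" assumes "ltop c D h" "laur_lt D h" shows False
proof -
  have "laur_lt D (\<lambda>s. h s - (h s - c * s powi D))"
    using laur_lt_diff assms unfolding ltop_def by blast
  then obtain xs where "\<forall>p\<in>set xs. snd p < D" "\<And>s. s \<noteq> 0 \<Longrightarrow> c * s powi D = (\<Sum>p\<leftarrow>xs. fst p * s powi snd p)"
    unfolding laur_lt_def by auto
  hence "c = 0" by (rule identity)
  thus False using assms unfolding ltop_def by simp
qed

lemma top_unique:
  fixes h :: "'k::field_char_0 \<Rightarrow> 'k"
  assumes "ltop c D h" "ltop c' D' h" shows "D = D'"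
proof (rule ccontr)
  assume "D \<noteq> D'"
  then consider "D < D'" | "D' < D" by linarith
  thus False
  proof cases
    case 1 thus False using top_not_lt[OF assms(2)] laur_lt_mono[OF top_laur_lt[OF assms(1)]] by simp
  next
    case 2 thus False using top_not_lt[OF assms(1)] laur_lt_mono[OF top_laur_lt[OF assms(2)]] by simp
  qed
qed

lemma top_cong: "ltop c D g \<Longrightarrow> (\<And>s. s \<noteq> 0 \<Longrightarrow> h s = g s) \<Longrightarrow> ltop c D h"
  unfolding ltop_def using laur_lt_cong[of D "\<lambda>s. g s - c * s powi D" "\<lambda>s. h s - c * s powi D"] by auto

lemma top_exact: "c \<noteq> 0 \<Longrightarrow> (\<And>s. s \<noteq> 0 \<Longrightarrow> h s = c * s powi D) \<Longrightarrow> ltop c D h"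
  unfolding ltop_def by (auto intro: laur_lt_cong[OF laur_lt_zero])

lemma top_binom: "c \<noteq> 0 \<Longrightarrow> E < D \<Longrightarrow> ltop c D (\<lambda>s. c * s powi D + b * s powi E)"
  unfolding ltop_def by (auto intro: laur_lt_mono[OF laur_lt_monom])

lemma top_mult: assumes "ltop c D h" "ltop b E g" shows "ltop (c*b) (D+E) (\<lambda>s. h s * g s)"
proof -
  have c: "c \<noteq> 0" "b \<noteq> 0" using assms unfolding ltop_def by auto
  have l1: "laur_lt D (\<lambda>s. h s - c * s powi D)" and l2: "laur_lt E (\<lambda>s. g s - b * s powi E)"
    using assms unfolding ltop_def by auto
  have A: "laur_lt (D+E) (\<lambda>s. c * s powi D * (g s - b * s powi E))"
    using laur_lt_scale[OF l2, of D c] by (simp add: add.commute)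
  have B: "laur_lt (E+D) (\<lambda>s. b * s powi E * (h s - c * s powi D))"
    using laur_lt_scale[OF l1, of E b] by (simp add: add.commute)
  have C: "laur_lt (D+E) (\<lambda>s. (h s - c * s powi D) * (g s - b * s powi E))"
    using laur_lt_mono[OF laur_lt_mult[OF l1 l2]] by simp
  have "laur_lt (D+E) (\<lambda>s. c * s powi D * (g s - b * s powi E) + b * s powi E * (h s - c * s powi D)
       + (h s - c * s powi D) * (g s - b * s powi E))"
    by (intro laur_lt_add A C) (use B in \<open>simp add: add.commute\<close>)
  hence "laur_lt (D+E) (\<lambda>s. h s * g s - c * b * s powi (D+E))"
    by (rule laur_lt_cong) (simp add: power_int_add algebra_simps)
  thus ?thesis using c unfolding ltop_def by simp
qed

lemma top_neg: "ltop c D h \<Longrightarrow> ltop (-c) D (\<lambda>s. - h s)"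
  unfolding ltop_def using laur_lt_neg[of D "\<lambda>s. h s - c * s powi D"] by (auto simp: algebra_simps)

lemma top_one: "ltop 1 0 (\<lambda>s. 1)"
  by (rule top_exact) auto

lemma top_prod:
  assumes "finite V" "\<And>v. v \<in> V \<Longrightarrow> ltop (c v) (D v) (h v)"
  shows "ltop (\<Prod>v\<in>V. c v) (\<Sum>v\<in>V. D v) (\<lambda>s. \<Prod>v\<in>V. h v s)"
  using assms
proof (induction V rule: finite_induct)
  case empty then show ?case by (simp add: top_one)
next
  case (insert x F)
  then show ?case using top_mult[of "c x" "D x" "h x" "prod c F"] by simp
qed

lemma top_power: "ltop c D h \<Longrightarrow> ltop (c ^ k) (D * int k) (\<lambda>s. h s ^ k)"
proof (induction k)
  case 0 then show ?case by (simp add: top_one)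
next
  case (Suc k)
  then show ?case using top_mult[of c D h "c^k" "D * int k" "\<lambda>s. h s ^ k"] by (simp add: algebra_simps)
qed

lemma top_powi:
  assumes "ltop c D h" and "0 \<le> k \<or> (\<forall>s. s \<noteq> 0 \<longrightarrow> h s = c * s powi D)"
  shows "ltop (c powi k) (D * k) (\<lambda>s. h s powi k)"
  using assms(2)
proof
  assume "0 \<le> k"
  then obtain j where "k = int j" by (metis nonneg_eq_int)
  thus ?thesis using top_power[OF assms(1), of j] by simp
next
  assume e: "\<forall>s. s \<noteq> 0 \<longrightarrow> h s = c * s powi D"
  have "c \<noteq> 0" using assms(1) unfolding ltop_def by simp
  thus ?thesis by (intro top_exact) (auto simp: e power_int_mult_distrib power_int_mult)
qed

lemma laur_lt_sum: "finite S \<Longrightarrow> (\<And>e. e \<in> S \<Longrightarrow> laur_lt D (h e)) \<Longrightarrow> laur_lt D (\<lambda>s. \<Sum>e\<in>S. h e s)"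
  by (induction S rule: finite_induct) (auto intro: laur_lt_add laur_lt_zero)

lemma top_sum:
  assumes "finite S" "e1 \<in> S" "\<And>e. e \<in> S \<Longrightarrow> ltop (c e) (D e) (h e)"
    "\<And>e. e \<in> S \<Longrightarrow> e \<noteq> e1 \<Longrightarrow> D e < D e1"
  shows "ltop (c e1) (D e1) (\<lambda>s. \<Sum>e\<in>S. h e s)"
proof -
  have "laur_lt (D e1) (\<lambda>s. \<Sum>e\<in>S-{e1}. h e s)"
  proof (intro laur_lt_sum)
    fix e assume "e \<in> S - {e1}"
    hence "ltop (c e) (D e) (h e)" "D e < D e1" using assms(3,4)[of e] by auto
    thus "laur_lt (D e1) (h e)" using laur_lt_mono[OF top_laur_lt[of "c e" "D e" "h e"], of "D e1"]
      by simp
  qed (use assms in auto)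
  moreover have "laur_lt (D e1) (\<lambda>s. h e1 s - c e1 * s powi D e1)" using assms(2,3) unfolding ltop_def by auto
  ultimately have "laur_lt (D e1) (\<lambda>s. (h e1 s - c e1 * s powi D e1) + (\<Sum>e\<in>S-{e1}. h e s))"
    by (intro laur_lt_add)
  moreover have "(\<Sum>e\<in>S. h e s) = h e1 s + (\<Sum>e\<in>S-{e1}. h e s)" for s
    using assms(1,2) by (simp add: sum.remove)
  ultimately show ?thesis using assms(2,3) unfolding ltop_def by (auto simp: algebra_simps)
qed

fun pos :: "nat \<Rightarrow> var \<Rightarrow> nat" where
  "pos n (VA i) = i - 1"
| "pos n (VB i) = n + i - 1"
| "pos n (VC i) = 2*n - 4 + i"
| "pos n (VD i) = 3*n - 4 + i"

definition Wp :: "nat \<Rightarrow> nat \<Rightarrow> nat \<Rightarrow> int" where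
  "Wp n M p = int M ^ (4*n - 8 - p)"

definition dd :: "nat \<Rightarrow> nat \<Rightarrow> (var \<Rightarrow> int) \<Rightarrow> int" where
  "dd n M e = (\<Sum>k<length (vars n). Wp n M k * e (vars n ! k))"

definition box :: "nat \<Rightarrow> int \<Rightarrow> (var \<Rightarrow> int) \<Rightarrow> bool" where
  "box n K e \<longleftrightarrow> (\<forall>v. v \<notin> set (vars n) \<longrightarrow> e v = 0) \<and> (\<forall>v. \<bar>e v\<bar> \<le> K)"

lemma length_vars: "4 \<le> n \<Longrightarrow> length (vars n) = 4*n - 7"
  by (simp add: vars_def)

lemma mem_vars: "v \<in> set (vars n) \<longleftrightarrow> (case v of VA i \<Rightarrow> 1 \<le> i \<and> i \<le> n | VB i \<Rightarrow> 1 \<le> i \<and> i + 3 \<le> n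
   | VC i \<Rightarrow> 1 \<le> i \<and> i \<le> n | VD i \<Rightarrow> 1 \<le> i \<and> i + 4 \<le> n)"
  by (cases v) (auto simp: vars_def)

lemma nth_vars:
  assumes "4 \<le> n" "k < 4*n - 7"
  shows "vars n ! k = (if k < n then VA (k+1) else if k < 2*n-3 then VB (k+1-n)
     else if k < 3*n-3 then VC (k+4-2*n) else VD (k+4-3*n))"
proof -
  have l: "length (map VA [1..<n+1]) = n" "length (map VB [1..<n-2]) = n - 3"
    "length (map VC [1..<n+1]) = n" "length (map VD [1..<n-3]) = n - 4" by auto
  show ?thesis
  proof (cases "k < n")
    case True
    have "vars n ! k = map VA [1..<n+1] ! k" using True unfolding vars_def
      by (simp add: nth_append_left nth_append_right del: upt_Suc)
    thus ?thesis using True by (simp del: upt_Suc)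
  next
    case c1: False
    show ?thesis
    proof (cases "k < 2*n-3")
      case True
      have "vars n ! k = map VB [1..<n-2] ! (k - n)" using c1 True unfolding vars_def
        by (simp add: nth_append_left nth_append_right del: upt_Suc)
      also have "\<dots> = VB (k+1-n)" using c1 True assms by (simp del: upt_Suc)
      finally show ?thesis using c1 True by simp
    next
      case c2: False
      show ?thesis
      proof (cases "k < 3*n-3")
        case True
        have "vars n ! k = map VC [1..<n+1] ! (k - n - (n-3))" using c1 c2 True assms unfolding vars_def
          by (simp add: nth_append_left nth_append_right del: upt_Suc)
        also have "\<dots> = VC (k+4-2*n)" using c1 c2 True assms by (simp del: upt_Suc)
        finally show ?thesis using c1 c2 True by simp
      next
        case c3: False
        have "vars n ! k = map VD [1..<n-3] ! (k - n - (n-3) - n)" using c1 c2 c3 assms unfolding vars_def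
          by (simp add: nth_append_left nth_append_right del: upt_Suc)
        also have "\<dots> = VD (k+4-3*n)" using c1 c2 c3 assms by (simp del: upt_Suc)
        finally show ?thesis using c1 c2 c3 by simp
      qed
    qed
  qed
qed

lemma pos_nth: "4 \<le> n \<Longrightarrow> k < 4*n - 7 \<Longrightarrow> pos n (vars n ! k) = k"
  by (auto simp: nth_vars)

lemma pos_lt: "4 \<le> n \<Longrightarrow> v \<in> set (vars n) \<Longrightarrow> pos n v < 4*n - 7"
  by (cases v) (auto simp: mem_vars)

lemma nth_pos: "4 \<le> n \<Longrightarrow> v \<in> set (vars n) \<Longrightarrow> vars n ! pos n v = v"
  by (cases v) (auto simp: mem_vars nth_vars)

lemma bij_vars: "4 \<le> n \<Longrightarrow> bij_betw (\<lambda>k. vars n ! k) {..<4*n-7} (set (vars n))"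
  by (rule bij_betw_byWitness[where f' = "pos n"]) (auto simp: pos_nth nth_pos pos_lt length_vars)

lemma dd_set: "4 \<le> n \<Longrightarrow> dd n M e = (\<Sum>v\<in>set (vars n). Wp n M (pos n v) * e v)"
  unfolding dd_def using sum.reindex_bij_betw[OF bij_vars, of n "\<lambda>v. Wp n M (pos n v) * e v"]
  by (simp add: length_vars pos_nth)

lemma dd_add: "dd n M (\<lambda>v. a v + b v) = dd n M a + dd n M b"
  unfolding dd_def by (simp add: algebra_simps sum.distrib)

lemma dd_diff: "dd n M (\<lambda>v. a v - b v) = dd n M a - dd n M b"
  unfolding dd_def by (simp add: algebra_simps sum_subtractf)

lemma dd_sum: "dd n M (\<lambda>v. \<Sum>x\<in>X. f x v) = (\<Sum>x\<in>X. dd n M (f x))"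
  unfolding dd_def by (simp add: sum_distrib_left sum.swap[of _ X])

definition uvec :: "var \<Rightarrow> var \<Rightarrow> int" where "uvec w = (\<lambda>v. if v = w then 1 else 0)"

lemma dd_unit: assumes "4 \<le> n" "w \<in> set (vars n)" shows "dd n M (uvec w) = Wp n M (pos n w)"
proof -
  have "(\<Sum>v\<in>set (vars n). Wp n M (pos n v) * uvec w v) = (\<Sum>v\<in>set (vars n). if v = w then Wp n M (pos n w) else 0)"
    by (rule sum.cong) (auto simp: uvec_def)
  thus ?thesis using assms by (simp add: dd_set sum.delta')
qed

lemma Wp_pos: "0 < M \<Longrightarrow> 0 < Wp n M p"
  by (simp add: Wp_def)

lemma Wp_dom: assumes "p < q" "q \<le> 4*n - 8" "0 < M" shows "int M * Wp n M q \<le> Wp n M p"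
proof -
  have e: "4*n - 8 - p = (4*n - 8 - q) + Suc (q - Suc p)" using assms by simp
  have "Wp n M p = Wp n M q * (int M * int M ^ (q - Suc p))"
    unfolding Wp_def e power_add by simp
  moreover have "1 \<le> int M ^ (q - Suc p)" using assms(3) by simp
  moreover have "0 \<le> Wp n M q * int M" using assms(3) by (simp add: Wp_def)
  ultimately show ?thesis
    by (metis mult.assoc mult.commute mult_left_mono mult.right_neutral)
qed

lemma Wp_dom3: assumes "3 \<le> M" "p < q" "q \<le> 4*n - 8" shows "3 * Wp n M q \<le> Wp n M p"
proof -
  have "3 * Wp n M q \<le> int M * Wp n M q"
    using assms(1) Wp_pos[of M n q] by (intro mult_right_mono) auto
  moreover have "int M * Wp n M q \<le> Wp n M p" using Wp_dom[OF assms(2,3)] assms(1) by simp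
  ultimately show ?thesis by linarith
qed

lemma tail_sum:
  assumes "4 \<le> n" "k < 4*n - 7"
  shows "(int M - 1) * (\<Sum>q\<in>{k<..<4*n-7}. Wp n M q) = Wp n M k - 1"
proof -
  have "\<forall>k. 4*n - 8 - k = j \<longrightarrow> k < 4*n - 7 \<longrightarrow> (int M - 1) * (\<Sum>q\<in>{k<..<4*n-7}. Wp n M q) = Wp n M k - 1" for j
  proof (induction j)
    case 0
    show ?case
    proof (intro allI impI)
      fix k assume "4*n - 8 - k = 0" "k < 4*n - 7"
      hence "{k<..<4*n-7} = {}" "4*n-8-k = 0" by auto
      thus "(int M - 1) * (\<Sum>q\<in>{k<..<4*n-7}. Wp n M q) = Wp n M k - 1" by (simp add: Wp_def)
    qed
  next
    case (Suc j)
    show ?case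
    proof (intro allI impI)
      fix k assume k: "4*n - 8 - k = Suc j" "k < 4*n - 7"
      have e: "{k<..<4*n-7} = insert (Suc k) {Suc k<..<4*n-7}" using k by auto
      have w: "Wp n M k = int M * Wp n M (Suc k)"
      proof -
        have "4*n - 8 - k = Suc (4*n - 8 - Suc k)" using k by simp
        thus ?thesis by (simp add: Wp_def)
      qed
      have IH: "(int M - 1) * (\<Sum>q\<in>{Suc k<..<4*n-7}. Wp n M q) = Wp n M (Suc k) - 1"
        using Suc.IH k by auto
      show "(int M - 1) * (\<Sum>q\<in>{k<..<4*n-7}. Wp n M q) = Wp n M k - 1"
        unfolding e w using IH by (simp add: algebra_simps)
    qed
  qed
  thus ?thesis using assms by blast
qed

lemma lex_mono:
  assumes n: "4 \<le> n" and K: "2 * K < int M" and a: "box n K a" and b: "box n K b"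
    and l: "lex_less n a b"
  shows "dd n M a < dd n M b"
proof -
  let ?L = "4*n - 7"
  obtain k where k: "k < ?L" "\<And>j. j < k \<Longrightarrow> a (vars n ! j) = b (vars n ! j)" "a (vars n ! k) < b (vars n ! k)"
    using l n unfolding lex_less_def by (auto simp: length_vars)
  have "0 \<le> K" using a unfolding box_def by (meson abs_ge_zero order_trans)
  hence M0: "0 < M" using K by simp
  define g where "g q = Wp n M q * (b (vars n ! q) - a (vars n ! q))" for q
  have split: "{..<?L} = insert k ({..<k} \<union> {k<..<?L})" using k(1) by auto
  have "dd n M b - dd n M a = (\<Sum>q<?L. g q)"
    unfolding dd_def g_def using n by (simp add: length_vars sum_subtractf algebra_simps)
  also have "\<dots> = g k + (\<Sum>q\<in>{..<k} \<union> {k<..<?L}. g q)"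
    unfolding split by (subst sum.insert) auto
  also have "(\<Sum>q\<in>{..<k} \<union> {k<..<?L}. g q) = (\<Sum>q<k. g q) + (\<Sum>q\<in>{k<..<?L}. g q)"
    by (rule sum.union_disjoint) auto
  also have "(\<Sum>q<k. g q) = 0" using k(2) unfolding g_def by simp
  finally have eq: "dd n M b - dd n M a = Wp n M k * (b (vars n ! k) - a (vars n ! k))
      + (\<Sum>q\<in>{k<..<?L}. Wp n M q * (b (vars n ! q) - a (vars n ! q)))" unfolding g_def by simp
  have "Wp n M k \<le> Wp n M k * (b (vars n ! k) - a (vars n ! k))"
    using k(3) Wp_pos[OF M0, of n k] by simp
  moreover have "- (2*K) * (\<Sum>q\<in>{k<..<?L}. Wp n M q) \<le> (\<Sum>q\<in>{k<..<?L}. Wp n M q * (b (vars n ! q) - a (vars n ! q)))"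
  proof -
    have "- (2*K) * (\<Sum>q\<in>{k<..<?L}. Wp n M q) = (\<Sum>q\<in>{k<..<?L}. Wp n M q * (- (2*K)))"
      by (simp add: sum_distrib_left mult_ac)
    also have "\<dots> \<le> (\<Sum>q\<in>{k<..<?L}. Wp n M q * (b (vars n ! q) - a (vars n ! q)))"
    proof (rule sum_mono)
      fix q
      have "\<bar>a (vars n ! q)\<bar> \<le> K" "\<bar>b (vars n ! q)\<bar> \<le> K" using a b unfolding box_def by auto
      hence "- (2*K) \<le> b (vars n ! q) - a (vars n ! q)" by linarith
      thus "Wp n M q * (- (2*K)) \<le> Wp n M q * (b (vars n ! q) - a (vars n ! q))"
        using Wp_pos[OF M0, of n q] by (intro mult_left_mono) auto
    qed
    finally show ?thesis .
  qed
  moreover have "(2*K) * (\<Sum>q\<in>{k<..<?L}. Wp n M q) \<le> (int M - 1) * (\<Sum>q\<in>{k<..<?L}. Wp n M q)"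
    using K by (intro mult_right_mono) (auto intro!: sum_nonneg less_imp_le[OF Wp_pos[OF M0]])
  moreover note tail_sum[OF n k(1), of M]
  ultimately show ?thesis using eq by linarith
qed

lemma lex_asym: assumes "lex_less n a b" "lex_less n b a" shows False
proof -
  obtain k1 where k1: "\<forall>j<k1. a (vars n ! j) = b (vars n ! j)" "a (vars n ! k1) < b (vars n ! k1)"
    using assms(1) unfolding lex_less_def by blast
  obtain k2 where k2: "\<forall>j<k2. b (vars n ! j) = a (vars n ! j)" "b (vars n ! k2) < a (vars n ! k2)"
    using assms(2) unfolding lex_less_def by blast
  show False
  proof (cases k1 k2 rule: linorder_cases)
    case less thus False using k1 k2 by force
  next
    case equal thus False using k1 k2 by force
  next
    case greater thus False using k1 k2 by force
  qed
qed

lemma lex_total: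
  assumes "box n K a" "box n K b" "a \<noteq> b"
  shows "lex_less n a b \<or> lex_less n b a"
proof -
  obtain v where v: "a v \<noteq> b v" using assms(3) by auto
  hence "v \<in> set (vars n)" using assms(1,2) unfolding box_def by metis
  then obtain j where j: "j < length (vars n)" "vars n ! j = v" by (meson in_set_conv_nth)
  define k where "k = (LEAST k. k < length (vars n) \<and> a (vars n ! k) \<noteq> b (vars n ! k))"
  have k: "k < length (vars n) \<and> a (vars n ! k) \<noteq> b (vars n ! k)"
    unfolding k_def by (rule LeastI[of _ j]) (use j v in auto)
  have less: "a (vars n ! i) = b (vars n ! i)" if "i < k" for i
    using not_less_Least[of i "\<lambda>k. k < length (vars n) \<and> a (vars n ! k) \<noteq> b (vars n ! k)"] that k
    unfolding k_def[symmetric] by auto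
  show ?thesis
  proof (cases "a (vars n ! k) < b (vars n ! k)")
    case True thus ?thesis unfolding lex_less_def using k less by blast
  next
    case False
    hence "b (vars n ! k) < a (vars n ! k)" using k by auto
    thus ?thesis unfolding lex_less_def using k less by (metis)
  qed
qed

definition wv :: "nat \<Rightarrow> nat \<Rightarrow> var \<Rightarrow> int" where "wv n M v = Wp n M (pos n v)"

definition eta :: "nat \<Rightarrow> nat \<Rightarrow> nat \<Rightarrow> int" where
  "eta n M i = (if i = 1 then - wv n M (VA 1) else wv n M (VC (i-1)) - wv n M (VA (i-1)))"

definition zeta :: "nat \<Rightarrow> nat \<Rightarrow> nat \<Rightarrow> int" where
  "zeta n M m = (if m = 1 then wv n M (VC n) - wv n M (VA n) else wv n M (VD (m-1)) - wv n M (VB (m-1)))"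

definition alp :: "nat \<Rightarrow> nat \<Rightarrow> 'k::field \<Rightarrow> nat \<Rightarrow> 'k \<times> 'k" where
  "alp n M s i = (- (s powi wv n M (VA i)), s powi eta n M i)"

definition bet :: "nat \<Rightarrow> nat \<Rightarrow> 'k::field \<Rightarrow> nat \<Rightarrow> 'k \<times> 'k" where
  "bet n M s m = (if m = n - 2 then (0, 1) else (- (s powi wv n M (VB m)), s powi zeta n M m))"

lemma wvA: "wv n M (VA i) = Wp n M (i - 1)" by (simp add: wv_def)
lemma wvB: "wv n M (VB i) = Wp n M (n + i - 1)" by (simp add: wv_def)
lemma wvC: "wv n M (VC i) = Wp n M (2*n - 4 + i)" by (simp add: wv_def)
lemma wvD: "wv n M (VD i) = Wp n M (3*n - 4 + i)" by (simp add: wv_def)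
lemmas wvs = wvA wvB wvC wvD

context
  fixes n M :: nat
  assumes n4: "4 \<le> n" and M3: "3 \<le> M"
begin

lemma P: "0 < Wp n M p" using M3 by (intro Wp_pos) simp

lemma D: "p < q \<Longrightarrow> q \<le> 4*n - 8 \<Longrightarrow> 3 * Wp n M q \<le> Wp n M p"
  using Wp_dom3[OF M3] by blast

lemma I1:
  assumes "1 \<le> i" "i < j" "j \<le> n"
  shows "wv n M (VA j) + eta n M i < wv n M (VA i) + eta n M j"
proof -
  have L: "wv n M (VA j) + eta n M i < 0"
  proof (cases "i = 1")
    case True
    have d0: "3 * Wp n M (j-1) \<le> Wp n M (0)" by (rule D) (insert assms n4 True, arith)+
    have d0p: "0 < Wp n M (j-1)" by (rule P)
    show ?thesis using True d0p d0  P[of "j-1"] assms n4 by (simp add: eta_def wvs)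
  next
    case False
    have d0: "3 * Wp n M (j-1) \<le> Wp n M (i-1-1)" by (rule D) (insert assms n4 False, arith)+
    have d0p: "0 < Wp n M (j-1)" by (rule P)
    have d1: "3 * Wp n M (2*n-4+(i-1)) \<le> Wp n M (i-1-1)" by (rule D) (insert assms n4 False, arith)+
    have d1p: "0 < Wp n M (2*n-4+(i-1))" by (rule P)
    show ?thesis using False d0p d1p d0 d1   P[of "j-1"] assms n4
      by (simp add: eta_def wvs)
  qed
  have R: "0 < wv n M (VA i) + eta n M j"
  proof (cases "j = i + 1")
    case True
    thus ?thesis using P[of "2*n-4+(j-1)"] assms by (simp add: eta_def wvs)
  next
    case False
    have d0: "3 * Wp n M (j-1-1) \<le> Wp n M (i-1)" by (rule D) (insert assms n4 False, arith)+
    have d0p: "0 < Wp n M (j-1-1)" by (rule P)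
    show ?thesis using False d0p d0  P[of "2*n-4+(j-1)"] assms n4 by (simp add: eta_def wvs)
  qed
  show ?thesis using L R by linarith
qed

lemma I2:
  assumes "1 \<le> i" "i \<le> n" "1 \<le> m" "m + 3 \<le> n"
  shows "wv n M (VB m) + eta n M i < wv n M (VA i) + zeta n M m"
proof -
  have L: "wv n M (VB m) + eta n M i < 0"
  proof (cases "i = 1")
    case True
    have d0: "3 * Wp n M (n+m-1) \<le> Wp n M (0)" by (rule D) (insert assms n4 True, arith)+
    have d0p: "0 < Wp n M (n+m-1)" by (rule P)
    show ?thesis using True d0p d0  P[of "n+m-1"] assms n4 by (simp add: eta_def wvs)
  next
    case False
    have d0: "3 * Wp n M (n+m-1) \<le> Wp n M (i-1-1)" by (rule D) (insert assms n4 False, arith)+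
    have d0p: "0 < Wp n M (n+m-1)" by (rule P)
    have d1: "3 * Wp n M (2*n-4+(i-1)) \<le> Wp n M (i-1-1)" by (rule D) (insert assms n4 False, arith)+
    have d1p: "0 < Wp n M (2*n-4+(i-1))" by (rule P)
    show ?thesis using False d0p d1p d0 d1   P[of "n+m-1"] assms n4
      by (simp add: eta_def wvs)
  qed
  have R: "0 < wv n M (VA i) + zeta n M m"
  proof (cases "m = 1")
    case True
    show ?thesis
    proof (cases "i = n")
      case True
      thus ?thesis using `m = 1` P[of "2*n-4+n"] by (simp add: zeta_def wvs)
    next
      case False
      have d0: "3 * Wp n M (n-1) \<le> Wp n M (i-1)" by (rule D) (insert assms n4 False, arith)+
      have d0p: "0 < Wp n M (n-1)" by (rule P)
      show ?thesis using False d0p d0 `m = 1`  P[of "2*n-4+n"] assms n4 by (simp add: zeta_def wvs)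
    qed
  next
    case False
    have d0: "3 * Wp n M (n+(m-1)-1) \<le> Wp n M (i-1)" by (rule D) (insert assms n4 False, arith)+
    have d0p: "0 < Wp n M (n+(m-1)-1)" by (rule P)
    show ?thesis using False d0p d0  P[of "3*n-4+(m-1)"] assms n4 by (simp add: zeta_def wvs)
  qed
  show ?thesis using L R by linarith
qed

lemma I5:
  assumes "1 \<le> m" "m + 4 \<le> n"
  shows "wv n M (VB (m+1)) + zeta n M m < wv n M (VD m)"
proof -
  have L: "wv n M (VB (m+1)) + zeta n M m < 0"
  proof (cases "m = 1")
    case True
    have d0: "3 * Wp n M (n+1) \<le> Wp n M (n-1)" by (rule D) (insert assms n4 True, arith)+
    have d0p: "0 < Wp n M (n+1)" by (rule P)
    have d1: "3 * Wp n M (2*n-4+n) \<le> Wp n M (n-1)" by (rule D) (insert assms n4 True, arith)+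
    have d1p: "0 < Wp n M (2*n-4+n)" by (rule P)
    show ?thesis using True d0p d1p d0 d1   P[of "n+1"] assms n4 by (simp add: zeta_def wvs)
  next
    case False
    have d0: "3 * Wp n M (n+m) \<le> Wp n M (n+(m-1)-1)" by (rule D) (insert assms n4 False, arith)+
    have d0p: "0 < Wp n M (n+m)" by (rule P)
    have d1: "3 * Wp n M (3*n-4+(m-1)) \<le> Wp n M (n+(m-1)-1)" by (rule D) (insert assms n4 False, arith)+
    have d1p: "0 < Wp n M (3*n-4+(m-1))" by (rule P)
    show ?thesis using False d0p d1p d0 d1   P[of "n+m"] assms n4
      by (simp add: zeta_def wvs)
  qed
  thus ?thesis using P[of "3*n-4+m"] by (simp add: wvs)
qed

lemma br_alp: "s \<noteq> 0 \<Longrightarrow> br (alp n M s i) (alp n M s j) =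
   (-1) * s powi (wv n M (VA i) + eta n M j) + 1 * s powi (wv n M (VA j) + eta n M i)"
  by (simp add: br_def alp_def power_int_add)

lemma top_AA:
  fixes dummy :: "'k::field_char_0"
  assumes "1 \<le> i" "i \<le> n" "1 \<le> j" "j \<le> n" "i \<noteq> j"
  shows "ltop (if i < j then -1 else (1::'k)) (wv n M (VA (min i j)) + eta n M (max i j))
     (\<lambda>s::'k. br (alp n M s i) (alp n M s j))"
proof (cases "i < j")
  case True
  have "ltop (-1::'k) (wv n M (VA i) + eta n M j)
      (\<lambda>s. (-1) * s powi (wv n M (VA i) + eta n M j) + 1 * s powi (wv n M (VA j) + eta n M i))"
    by (rule top_binom) (use I1[of i j] assms True in auto)
  hence "ltop (-1::'k) (wv n M (VA i) + eta n M j) (\<lambda>s::'k. br (alp n M s i) (alp n M s j))"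
    by (rule top_cong) (simp add: br_alp)
  thus ?thesis using True by simp
next
  case False
  hence ji: "j < i" using assms by simp
  have "ltop (1::'k) (wv n M (VA j) + eta n M i)
      (\<lambda>s. 1 * s powi (wv n M (VA j) + eta n M i) + (-1) * s powi (wv n M (VA i) + eta n M j))"
    by (rule top_binom) (use I1[of j i] assms ji in auto)
  hence "ltop (1::'k) (wv n M (VA j) + eta n M i) (\<lambda>s::'k. br (alp n M s i) (alp n M s j))"
    by (rule top_cong) (simp add: br_alp add.commute)
  thus ?thesis using ji by simp
qed

lemma top_BA:
  fixes dummy :: "'k::field_char_0"
  assumes "1 \<le> i" "i \<le> n" "1 \<le> m" "m \<le> n - 2"
  shows "ltop (1::'k) (if m = n - 2 then wv n M (VA i) else wv n M (VA i) + zeta n M m)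
     (\<lambda>s::'k. br (bet n M s m) (alp n M s i))"
proof (cases "m = n - 2")
  case True
  thus ?thesis by (intro top_exact) (auto simp: br_def alp_def bet_def)
next
  case False
  have "ltop (1::'k) (wv n M (VA i) + zeta n M m)
      (\<lambda>s. 1 * s powi (wv n M (VA i) + zeta n M m) + (-1) * s powi (wv n M (VB m) + eta n M i))"
    by (rule top_binom) (use I2[of i m] assms False in auto)
  hence "ltop (1::'k) (wv n M (VA i) + zeta n M m) (\<lambda>s::'k. br (bet n M s m) (alp n M s i))"
    by (rule top_cong) (simp add: br_def alp_def bet_def power_int_add False)
  thus ?thesis using False by simp
qed

definition kap :: "var \<Rightarrow> 'k::field" where
  "kap v = (case v of VA _ \<Rightarrow> 1 | VB _ \<Rightarrow> 1 | _ \<Rightarrow> -1)"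

lemma exact_var:
  assumes "v \<in> set (vars n)" "inv_ok n v" "(s::'k::field) \<noteq> 0"
  shows "varval n (alp n M s) (bet n M s) v = kap v * s powi wv n M v"
proof (cases v)
  case (VA i) thus ?thesis using assms n4 by (simp add: varval_def br_def alp_def bet_def kap_def)
next
  case (VB i)
  hence "i \<noteq> n - 2" using assms by (simp add: inv_ok_def) arith
  thus ?thesis using assms n4 VB by (simp add: varval_def inv_ok_def br_def alp_def bet_def kap_def)
next
  case (VC i) thus ?thesis using assms by (simp add: inv_ok_def)
next
  case (VD i) thus ?thesis using assms by (simp add: inv_ok_def)
qed

lemma top_var:
  fixes dummy :: "'k::field_char_0"
  assumes "v \<in> set (vars n)"
  shows "ltop (kap v :: 'k) (wv n M v) (\<lambda>s::'k. varval n (alp n M s) (bet n M s) v)"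
proof (cases v)
  case (VA i)
  thus ?thesis using assms n4
    by (intro top_exact) (auto simp: varval_def br_def alp_def bet_def kap_def mem_vars)
next
  case (VB i)
  thus ?thesis using assms n4
    by (intro top_exact) (auto simp: varval_def br_def alp_def bet_def kap_def mem_vars)
next
  case (VC i)
  hence i: "1 \<le> i" "i \<le> n" using assms by (auto simp: mem_vars)
  show ?thesis
  proof (cases "i < n")
    case True
    have e: "wv n M (VA i) + eta n M (i+1) = wv n M (VC i)" using i by (simp add: eta_def)
    from top_AA[of i "i+1"] i True e have "ltop (-1::'k) (wv n M (VC i)) (\<lambda>s::'k. br (alp n M s i) (alp n M s (i+1)))"
      by simp
    thus ?thesis using VC True by (simp add: varval_def kap_def)
  next
    case False
    hence "i = n" using i by simp
    have e: "wv n M (VA n) + zeta n M 1 = wv n M (VC n)" by (simp add: zeta_def)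
    have b1: "bet n M s 1 = (- (s powi wv n M (VB 1)), s powi zeta n M 1)" for s :: 'k
      using n4 by (simp add: bet_def)
    have "ltop (-1::'k) (wv n M (VA n) + zeta n M 1)
      (\<lambda>s. (-1) * s powi (wv n M (VA n) + zeta n M 1) + 1 * s powi (wv n M (VB 1) + eta n M n))"
      by (rule top_binom) (use I2[of n 1] n4 in auto)
    hence "ltop (-1::'k) (wv n M (VA n) + zeta n M 1) (\<lambda>s::'k. br (alp n M s n) (bet n M s 1))"
      by (rule top_cong) (simp only: br_def alp_def b1 fst_conv snd_conv, simp add: power_int_add)
    hence "ltop (-1::'k) (wv n M (VC n)) (\<lambda>s::'k. br (alp n M s n) (bet n M s 1))" unfolding e .
    thus ?thesis using VC \<open>i = n\<close> by (simp add: varval_def kap_def)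
  qed
next
  case (VD m)
  hence m: "1 \<le> m" "m + 4 \<le> n" using assms by (auto simp: mem_vars)
  have e: "wv n M (VB m) + zeta n M (m+1) = wv n M (VD m)" using m by (simp add: zeta_def)
  have b1: "bet n M s m = (- (s powi wv n M (VB m)), s powi zeta n M m)"
     "bet n M s (m+1) = (- (s powi wv n M (VB (m+1))), s powi zeta n M (m+1))" for s :: 'k
    using m by (auto simp: bet_def)
  have "ltop (-1::'k) (wv n M (VB m) + zeta n M (m+1))
      (\<lambda>s. (-1) * s powi (wv n M (VB m) + zeta n M (m+1)) + 1 * s powi (wv n M (VB (m+1)) + zeta n M m))"
    by (rule top_binom) (use I5[of m] m e in auto)
  hence "ltop (-1::'k) (wv n M (VB m) + zeta n M (m+1)) (\<lambda>s::'k. br (bet n M s m) (bet n M s (m+1)))"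
    by (rule top_cong) (simp only: br_def b1 fst_conv snd_conv, simp add: power_int_add)
  hence "ltop (-1::'k) (wv n M (VD m)) (\<lambda>s::'k. br (bet n M s m) (bet n M s (m+1)))" unfolding e .
  thus ?thesis using VD by (simp add: varval_def kap_def)
qed

end

definition vAA :: "nat \<Rightarrow> nat \<Rightarrow> var \<Rightarrow> int" where
  "vAA i j = (\<lambda>v. uvec (VA (min i j)) v + uvec (VC (max i j - 1)) v - uvec (VA (max i j - 1)) v)"

definition vBA :: "nat \<Rightarrow> nat \<Rightarrow> nat \<Rightarrow> var \<Rightarrow> int" where
  "vBA n m i = (if m = n - 2 then uvec (VA i) else if m = 1 then (\<lambda>v. uvec (VA i) v + uvec (VC n) v - uvec (VA n) v)
     else (\<lambda>v. uvec (VA i) v + uvec (VD (m-1)) v - uvec (VB (m-1)) v))"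

definition estar :: "nat \<Rightarrow> nat set \<Rightarrow> var \<Rightarrow> int" where
  "estar n I = (\<lambda>v. (\<Sum>j\<in>{1..n} - I. \<Sum>i\<in>{1..n} - {j}. vAA i j v) + (\<Sum>i\<in>I. \<Sum>m\<in>{1..n-2}. vBA n m i v))"

lemma sum_if_const: "finite A \<Longrightarrow> (\<Sum>x\<in>A. if P x then c else 0) = of_nat (card {x\<in>A. P x}) * (c::int)"
  by (simp add: sum.inter_filter[symmetric])

lemma vAA_A: "vAA i j (VA l) = (if l = min i j then 1 else 0) - (if l = max i j - 1 then 1 else 0)"
  by (simp add: vAA_def uvec_def)

lemma vBA_A: "4 \<le> n \<Longrightarrow> vBA n m i (VA l) = (if l = i then 1 else 0) - (if m = 1 \<and> l = n then 1 else 0)"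
  by (auto simp: vBA_def uvec_def)

lemma h1:
  assumes "j \<in> {1..n}" "l \<in> {1..n}"
  shows "(\<Sum>i\<in>{1..n} - {j}. if l = min i j then 1 else 0) = (if l = j then int (n - j) else if l < j then 1 else (0::int))"
proof -
  have "(\<Sum>i\<in>{1..n} - {j}. if l = min i j then 1 else 0) = int (card {i\<in>{1..n} - {j}. l = min i j})"
    by (simp add: sum_if_const)
  also have "{i\<in>{1..n} - {j}. l = min i j} = (if l = j then {j<..n} else if l < j then {l} else {})"
    using assms by (auto simp: min_def split: if_splits)
  finally show ?thesis by auto
qed

lemma h2:
  assumes "j \<in> {1..n}" "l \<in> {1..n}"
  shows "(\<Sum>i\<in>{1..n} - {j}. if l = max i j - 1 then 1 else 0) =
    (if j = l + 1 then int l else if j \<le> l \<and> l < n then 1 else (0::int))"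
proof -
  have "(\<Sum>i\<in>{1..n} - {j}. if l = max i j - 1 then 1 else 0) = int (card {i\<in>{1..n} - {j}. l = max i j - 1})"
    by (simp add: sum_if_const)
  also have "{i\<in>{1..n} - {j}. l = max i j - 1} = (if j = l + 1 then {1..l} else if j \<le> l \<and> l < n then {l+1} else {})"
    using assms by (auto simp: max_def split: if_splits)
  finally show ?thesis by auto
qed

lemma estar_A:
  assumes n: "4 \<le> n" and l: "l \<in> {1..n}" and I: "I \<subseteq> {1..n}"
  shows "estar n I (VA l) =
           (if l \<in> I then int n - 2 else int n - int l)
         - (if l + 1 \<in> {1..n} - I then int l else 0)
         + (if l \<le> n - 1 then int n - int (card I) - 2 * int (card (({1..n} - I) \<inter> {1..l}))
            else - int (card I))"
proof -
  define J where "J = {1..n} - I"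
  have fJ: "finite J" and fI: "finite I" and J: "J \<subseteq> {1..n}" using I unfolding J_def by (auto intro: finite_subset)
  have cJ: "card J = n - card I" unfolding J_def using I by (simp add: card_Diff_subset finite_subset)
  have cI: "card I \<le> n" using I card_mono[of "{1..n}" I] by simp
  have BA: "(\<Sum>i\<in>I. \<Sum>m\<in>{1..n-2}. vBA n m i (VA l)) =
      (if l \<in> I then int n - 2 else 0) - (if l = n then int (card I) else 0)"
  proof -
    have inner: "(\<Sum>m\<in>{1..n-2}. vBA n m i (VA l)) = (int n - 2) * (if l = i then 1 else 0) - (if l = n then 1 else 0)" for i
    proof -
      have "(\<Sum>m\<in>{1..n-2}. vBA n m i (VA l)) =
          (\<Sum>m\<in>{1..n-2}. (if l = i then 1 else 0)) - (\<Sum>m\<in>{1..n-2}. if m = 1 \<and> l = n then 1 else 0)"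
        by (simp add: vBA_A[OF n] sum_subtractf)
      also have "(\<Sum>m\<in>{1..n-2}. if m = 1 \<and> l = n then 1 else (0::int)) = (if l = n then 1 else 0)"
        using n by (simp add: sum.delta) arith
      finally show ?thesis using n by (simp add: of_nat_diff)
    qed
    have "(\<Sum>i\<in>I. \<Sum>m\<in>{1..n-2}. vBA n m i (VA l)) =
        (int n - 2) * (\<Sum>i\<in>I. if l = i then 1 else 0) - (\<Sum>i\<in>I. if l = n then 1 else 0)"
      unfolding inner by (simp add: sum_subtractf sum_distrib_left)
    also have "(\<Sum>i\<in>I. if l = i then 1 else (0::int)) = (if l \<in> I then 1 else 0)"
      using fI by (simp add: sum.delta)
    finally show ?thesis by auto
  qed
  have AA: "(\<Sum>j\<in>J. \<Sum>i\<in>{1..n} - {j}. vAA i j (VA l)) =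
      (if l \<in> J then int (n - l) else 0) + int (card {j\<in>J. l < j})
      - (if l + 1 \<in> J then int l else 0) - (if l < n then int (card {j\<in>J. j \<le> l}) else 0)"
  proof -
    have "(\<Sum>j\<in>J. \<Sum>i\<in>{1..n} - {j}. vAA i j (VA l)) =
        (\<Sum>j\<in>J. (if l = j then int (n - j) else if l < j then 1 else 0)
            - (if j = l + 1 then int l else if j \<le> l \<and> l < n then 1 else 0))"
    proof (rule sum.cong[OF refl])
      fix j assume "j \<in> J"
      hence j: "j \<in> {1..n}" using J by auto
      show "(\<Sum>i\<in>{1..n} - {j}. vAA i j (VA l)) = (if l = j then int (n - j) else if l < j then 1 else 0)
            - (if j = l + 1 then int l else if j \<le> l \<and> l < n then 1 else 0)"
        unfolding vAA_A sum_subtractf h1[OF j l] h2[OF j l] ..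
    qed
    also have "\<dots> = (\<Sum>j\<in>J. if l = j then int (n - l) else 0) + (\<Sum>j\<in>J. if l < j then 1 else 0)
        - (\<Sum>j\<in>J. if j = l + 1 then int l else 0) - (\<Sum>j\<in>J. if j \<le> l \<and> l < n then 1 else 0)"
    proof -
      have "(\<Sum>j\<in>J. (if l = j then int (n - j) else if l < j then 1 else 0)
            - (if j = l + 1 then int l else if j \<le> l \<and> l < n then 1 else 0)) =
          (\<Sum>j\<in>J. ((if l = j then int (n - l) else 0) + (if l < j then 1 else 0))
            - ((if j = l + 1 then int l else 0) + (if j \<le> l \<and> l < n then 1 else 0)))"
        by (rule sum.cong) auto
      thus ?thesis by (simp add: sum_subtractf sum.distrib)
    qed
    also have "(\<Sum>j\<in>J. if l = j then int (n - l) else 0) = (if l \<in> J then int (n - l) else 0)"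
      using fJ by (simp add: sum.delta)
    also have "(\<Sum>j\<in>J. if j = l + 1 then int l else 0) = (if l + 1 \<in> J then int l else 0)"
      using fJ by (simp add: sum.delta')
    also have "(\<Sum>j\<in>J. if l < j then 1 else (0::int)) = int (card {j\<in>J. l < j})"
      using fJ by (simp add: sum_if_const)
    also have "(\<Sum>j\<in>J. if j \<le> l \<and> l < n then 1 else (0::int)) = (if l < n then int (card {j\<in>J. j \<le> l}) else 0)"
      using fJ by (simp add: sum_if_const)
    finally show ?thesis .
  qed
  have split: "card {j\<in>J. l < j} + card {j\<in>J. j \<le> l} = card J"
  proof -
    have "card J = card ({j\<in>J. l < j} \<union> {j\<in>J. j \<le> l})" by (rule arg_cong[where f=card]) auto
    also have "\<dots> = card {j\<in>J. l < j} + card {j\<in>J. j \<le> l}" by (rule card_Un_disjoint) (use fJ in auto)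
    finally show ?thesis by simp
  qed
  have cl: "{j\<in>J. j \<le> l} = J \<inter> {1..l}" using J by auto
  have ln: "l = n \<Longrightarrow> card {j\<in>J. l < j} = 0" using J by (auto simp: card_eq_0_iff)
  have "estar n I (VA l) = (\<Sum>j\<in>J. \<Sum>i\<in>{1..n} - {j}. vAA i j (VA l)) + (\<Sum>i\<in>I. \<Sum>m\<in>{1..n-2}. vBA n m i (VA l))"
    unfolding estar_def J_def ..
  also note AA
  also note BA
  finally have E: "estar n I (VA l) = (if l \<in> J then int (n - l) else 0) + int (card {j\<in>J. l < j})
      - (if l + 1 \<in> J then int l else 0) - (if l < n then int (card {j\<in>J. j \<le> l}) else 0)
      + ((if l \<in> I then int n - 2 else 0) - (if l = n then int (card I) else 0))" .
  have lJ: "l \<in> J \<longleftrightarrow> l \<notin> I" using l unfolding J_def by auto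
  show ?thesis
    unfolding E J_def[symmetric] cl[symmetric]
    using split cJ cI ln l lJ by (auto simp: of_nat_diff)
qed

lemma uvec_out: "v \<notin> set (vars n) \<Longrightarrow> w \<in> set (vars n) \<Longrightarrow> uvec w v = 0"
  by (auto simp: uvec_def)

lemma vAA_out:
  assumes "v \<notin> set (vars n)" "i \<in> {1..n}" "j \<in> {1..n}" "i \<noteq> j"
  shows "vAA i j v = 0"
proof -
  have "VA (min i j) \<in> set (vars n)" "VC (max i j - 1) \<in> set (vars n)" "VA (max i j - 1) \<in> set (vars n)"
    using assms by (auto simp: mem_vars min_def max_def)
  thus ?thesis using assms(1) by (simp add: vAA_def uvec_out)
qed

lemma vBA_out:
  assumes "4 \<le> n" "v \<notin> set (vars n)" "i \<in> {1..n}" "m \<in> {1..n-2}"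
  shows "vBA n m i v = 0"
proof -
  have "VA i \<in> set (vars n)" "VA n \<in> set (vars n)" "VC n \<in> set (vars n)" using assms by (auto simp: mem_vars)
  moreover have "m \<noteq> n - 2 \<Longrightarrow> m \<noteq> 1 \<Longrightarrow> VD (m-1) \<in> set (vars n) \<and> VB (m-1) \<in> set (vars n)"
    using assms by (auto simp: mem_vars)
  ultimately show ?thesis using assms(2) by (auto simp: vBA_def uvec_out)
qed

lemma estar_out:
  assumes "4 \<le> n" "I \<subseteq> {1..n}" "v \<notin> set (vars n)"
  shows "estar n I v = 0"
  unfolding estar_def using assms vAA_out[OF assms(3)] vBA_out[OF assms(1,3)] by (auto intro!: sum.neutral)

context
  fixes n M :: nat
  assumes n4: "4 \<le> n" and M3: "3 \<le> M"
begin

lemma dd_vAA: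
  assumes "i \<in> {1..n}" "j \<in> {1..n}" "i \<noteq> j"
  shows "dd n M (vAA i j) = wv n M (VA (min i j)) + eta n M (max i j)"
proof -
  have m: "VA (min i j) \<in> set (vars n)" "VC (max i j - 1) \<in> set (vars n)" "VA (max i j - 1) \<in> set (vars n)"
    using assms by (auto simp: mem_vars min_def max_def)
  have "max i j \<noteq> 1" using assms by (auto simp: max_def)
  thus ?thesis unfolding vAA_def dd_diff dd_add using m n4 by (simp add: dd_unit wv_def eta_def)
qed

lemma dd_vBA:
  assumes "i \<in> {1..n}" "m \<in> {1..n-2}"
  shows "dd n M (vBA n m i) = (if m = n - 2 then wv n M (VA i) else wv n M (VA i) + zeta n M m)"
proof -
  have a: "VA i \<in> set (vars n)" "VA n \<in> set (vars n)" "VC n \<in> set (vars n)" using assms n4 by (auto simp: mem_vars)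
  show ?thesis
  proof (cases "m = n - 2")
    case True thus ?thesis using a n4 by (simp add: vBA_def dd_unit wv_def)
  next
    case False
    show ?thesis
    proof (cases "m = 1")
      case True thus ?thesis using a n4 False
        by (simp add: vBA_def dd_unit dd_diff dd_add wv_def zeta_def)
    next
      case c: False
      hence b: "VD (m-1) \<in> set (vars n)" "VB (m-1) \<in> set (vars n)" using assms False by (auto simp: mem_vars)
      show ?thesis using a b n4 False c by (simp add: vBA_def dd_unit dd_diff dd_add wv_def zeta_def)
    qed
  qed
qed

lemma ftop:
  fixes dummy :: "'k::field_char_0"
  assumes I: "I \<subseteq> {1..n}"
  shows "\<exists>c. ltop (c::'k) (dd n M (estar n I)) (\<lambda>s::'k.
           (\<Prod>j\<in>{1..n} - I. \<Prod>i\<in>{1..n} - {j}. br (alp n M s i) (alp n M s j)) *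
           (\<Prod>i\<in>I. \<Prod>m\<in>{1..n-2}. br (bet n M s m) (alp n M s i)))"
proof -
  have fI: "finite I" using I by (rule finite_subset) simp
  have A: "ltop (\<Prod>j\<in>{1..n} - I. \<Prod>i\<in>{1..n} - {j}. if i < j then -1 else (1::'k))
      (\<Sum>j\<in>{1..n} - I. \<Sum>i\<in>{1..n} - {j}. dd n M (vAA i j))
      (\<lambda>s::'k. \<Prod>j\<in>{1..n} - I. \<Prod>i\<in>{1..n} - {j}. br (alp n M s i) (alp n M s j))"
  proof (rule top_prod)
    fix j assume j: "j \<in> {1..n} - I"
    show "ltop (\<Prod>i\<in>{1..n} - {j}. if i < j then -1 else (1::'k))
      (\<Sum>i\<in>{1..n} - {j}. dd n M (vAA i j)) (\<lambda>s::'k. \<Prod>i\<in>{1..n} - {j}. br (alp n M s i) (alp n M s j))"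
    proof (rule top_prod)
      fix i assume i: "i \<in> {1..n} - {j}"
      show "ltop (if i < j then -1 else (1::'k)) (dd n M (vAA i j)) (\<lambda>s::'k. br (alp n M s i) (alp n M s j))"
        using top_AA[OF n4 M3, of i j] dd_vAA[of i j] i j by auto
    qed simp
  qed simp
  have B: "ltop (\<Prod>i\<in>I. \<Prod>m\<in>{1..n-2}. (1::'k))
      (\<Sum>i\<in>I. \<Sum>m\<in>{1..n-2}. dd n M (vBA n m i))
      (\<lambda>s::'k. \<Prod>i\<in>I. \<Prod>m\<in>{1..n-2}. br (bet n M s m) (alp n M s i))"
  proof (rule top_prod[OF fI])
    fix i assume i: "i \<in> I"
    show "ltop (\<Prod>m\<in>{1..n-2}. (1::'k)) (\<Sum>m\<in>{1..n-2}. dd n M (vBA n m i))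
       (\<lambda>s::'k. \<Prod>m\<in>{1..n-2}. br (bet n M s m) (alp n M s i))"
    proof (rule top_prod)
      fix m assume m: "m \<in> {1..n-2}"
      show "ltop (1::'k) (dd n M (vBA n m i)) (\<lambda>s::'k. br (bet n M s m) (alp n M s i))"
        using top_BA[OF n4 M3, of i m] dd_vBA[of i m] i m I by auto
    qed simp
  qed
  have "dd n M (estar n I) = (\<Sum>j\<in>{1..n} - I. \<Sum>i\<in>{1..n} - {j}. dd n M (vAA i j)) +
      (\<Sum>i\<in>I. \<Sum>m\<in>{1..n-2}. dd n M (vBA n m i))"
    unfolding estar_def dd_add dd_sum ..
  thus ?thesis using top_mult[OF A B] by auto
qed

end

lemma term_top:
  fixes P :: "(var \<Rightarrow> int) \<Rightarrow> 'k::field_char_0"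
  assumes n4: "4 \<le> n" and M3: "3 \<le> M"
    and e: "\<forall>v. e v < 0 \<longrightarrow> inv_ok n v" and Pe: "P e \<noteq> 0"
  shows "ltop (P e * (\<Prod>v\<in>set (vars n). kap v powi e v)) (0 + dd n M e)
     (\<lambda>s::'k. P e * (\<Prod>v\<in>set (vars n). varval n (alp n M s) (bet n M s) v powi e v))"
proof (rule top_mult)
  show "ltop (P e) 0 (\<lambda>s. P e)" by (rule top_exact) (use Pe in auto)
  have "ltop (\<Prod>v\<in>set (vars n). kap v powi e v) (\<Sum>v\<in>set (vars n). wv n M v * e v)
     (\<lambda>s::'k. \<Prod>v\<in>set (vars n). varval n (alp n M s) (bet n M s) v powi e v)"
  proof (rule top_prod)
    fix v assume v: "v \<in> set (vars n)"
    show "ltop (kap v powi e v) (wv n M v * e v) (\<lambda>s::'k. varval n (alp n M s) (bet n M s) v powi e v)"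
    proof (rule top_powi)
      show "ltop (kap v) (wv n M v) (\<lambda>s::'k. varval n (alp n M s) (bet n M s) v)"
        by (rule top_var[OF n4 M3 v])
      show "0 \<le> e v \<or> (\<forall>s::'k. s \<noteq> 0 \<longrightarrow> varval n (alp n M s) (bet n M s) v = kap v * s powi wv n M v)"
        using exact_var[OF n4 M3 v] e by force
    qed
  qed simp
  thus "ltop (\<Prod>v\<in>set (vars n). kap v powi e v) (dd n M e)
     (\<lambda>s::'k. \<Prod>v\<in>set (vars n). varval n (alp n M s) (bet n M s) v powi e v)"
    using n4 by (simp add: dd_set wv_def)
qed

theorem lemma5p5:
  fixes n l :: nat and I :: "nat set" and P :: "(var \<Rightarrow> int) \<Rightarrow> 'k::field_char_0"
  assumes "n \<ge> 4" and "l \<in> {1..n}" and "I \<subseteq> {1..n}"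
    and "is_laurent n P"
    and "represents n P (\<lambda>\<alpha> \<beta>.
           (\<Prod>j\<in>{1..n} - I. \<Prod>i\<in>{1..n} - {j}. br (\<alpha> i) (\<alpha> j)) *
           (\<Prod>i\<in>I. \<Prod>m\<in>{1..n-2}. br (\<beta> m) (\<alpha> i)))"
  shows "lm n P (VA l) =
           (if l \<in> I then int n - 2 else int n - int l)
         - (if l + 1 \<in> {1..n} - I then int l else 0)
         + (if l \<le> n - 1 then int n - int (card I) - 2 * int (card (({1..n} - I) \<inter> {1..l}))
            else - int (card I))"
proof -
  have n4: "4 \<le> n" using assms(1) by simp
  define V where "V = set (vars n)"
  define S where "S = {e. P e \<noteq> 0}"
  have fS: "finite S" using assms(4) unfolding is_laurent_def S_def by simp
  have Sout: "\<And>e v. e \<in> S \<Longrightarrow> v \<notin> V \<Longrightarrow> e v = 0" and Sneg: "\<And>e. e \<in> S \<Longrightarrow> \<forall>v. e v < 0 \<longrightarrow> inv_ok n v"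
    using assms(4) unfolding is_laurent_def S_def V_def by auto
  define E where "E = estar n I"
  have Eout: "\<And>v. v \<notin> V \<Longrightarrow> E v = 0" unfolding E_def V_def using estar_out[OF n4 assms(3)] by simp
  define K where "K = Max (insert 0 ((\<lambda>(e,v). \<bar>e v\<bar>) ` (insert E S \<times> V)))"
  have fV: "finite V" unfolding V_def by simp
  have fK: "finite (insert 0 ((\<lambda>(e,v). \<bar>e v\<bar>) ` (insert E S \<times> V)))" using fS fV by simp
  have K0: "0 \<le> K" unfolding K_def using fK by simp
  have boxes: "box n K e" if "e \<in> insert E S" for e
  proof -
    have "\<bar>e v\<bar> \<le> K" for v
    proof (cases "v \<in> V")
      case True
      hence "\<bar>e v\<bar> \<in> insert 0 ((\<lambda>(e,v). \<bar>e v\<bar>) ` (insert E S \<times> V))" using that by force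
      thus ?thesis unfolding K_def using fK by simp
    next
      case False
      have "e v = 0"
      proof (cases "e = E")
        case True thus ?thesis using Eout False by simp
      next
        case c: False
        hence "e \<in> S" using that by simp
        thus ?thesis using Sout False by simp
      qed
      thus ?thesis using K0 by simp
    qed
    thus ?thesis unfolding box_def V_def[symmetric] using that Sout Eout by auto
  qed
  define M where "M = nat (2*K + 3)"
  have M3: "3 \<le> M" and K2: "2 * K < int M" unfolding M_def using K0 by auto
  have dd_inj: "a = b" if "box n K a" "box n K b" "dd n M a = dd n M b" for a b
  proof (rule ccontr)
    assume "a \<noteq> b"
    hence "lex_less n a b \<or> lex_less n b a" using lex_total that by blast
    thus False using lex_mono[OF n4 K2] that by force
  qed
  let ?F = "\<lambda>\<alpha> \<beta>. (\<Prod>j\<in>{1..n} - I. \<Prod>i\<in>{1..n} - {j}. br (\<alpha> i) (\<alpha> j)) *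
           (\<Prod>i\<in>I. \<Prod>m\<in>{1..n-2}. br (\<beta> m) (\<alpha> i))"
  let ?T = "\<lambda>e (s::'k). P e * (\<Prod>v\<in>V. varval n (alp n M s) (bet n M s) v powi e v)"
  have rep: "?F (alp n M s) (bet n M s) = (\<Sum>e\<in>S. ?T e s)" if s: "(s::'k) \<noteq> 0" for s
  proof -
    have "\<forall>v\<in>set (vars n). inv_ok n v \<longrightarrow> varval n (alp n M s) (bet n M s) v \<noteq> 0"
    proof (intro ballI impI)
      fix v assume v: "v \<in> set (vars n)" "inv_ok n v"
      have k: "kap v \<noteq> (0::'k)" by (cases v) (simp_all add: kap_def[OF n4 M3])
      show "varval n (alp n M s) (bet n M s) v \<noteq> 0"
        using exact_var[OF n4 M3 v s] k s by simp
    qed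
    thus ?thesis using assms(5) unfolding represents_def lev_def S_def V_def by blast
  qed
  obtain cF where ftop: "ltop cF (dd n M E) (\<lambda>s::'k. ?F (alp n M s) (bet n M s))"
    using ftop[OF n4 M3 assms(3)] unfolding E_def by blast
  have Sne: "S \<noteq> {}"
  proof
    assume "S = {}"
    hence "laur_lt (dd n M E) (\<lambda>s::'k. ?F (alp n M s) (bet n M s))"
      using rep by (intro laur_lt_cong[OF laur_lt_zero]) auto
    thus False using top_not_lt[OF ftop] by blast
  qed
  obtain e1 where e1: "e1 \<in> S" "\<And>e. e \<in> S \<Longrightarrow> dd n M e \<le> dd n M e1"
  proof -
    have "Max (dd n M ` S) \<in> dd n M ` S" using fS Sne by simp
    then obtain e1 where "e1 \<in> S" "dd n M e1 = Max (dd n M ` S)" by auto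
    thus ?thesis using that fS by auto
  qed
  have lt: "dd n M e < dd n M e1" if "e \<in> S" "e \<noteq> e1" for e
    using e1(2)[OF that(1)] dd_inj[of e e1] boxes that e1(1) by force
  have stop: "ltop (P e1 * (\<Prod>v\<in>V. kap v powi e1 v)) (dd n M e1) (\<lambda>s::'k. \<Sum>e\<in>S. ?T e s)"
  proof (rule top_sum[OF fS e1(1), where D = "dd n M"])
    fix e assume "e \<in> S"
    thus "ltop (P e * (\<Prod>v\<in>V. kap v powi e v)) (dd n M e) (?T e)"
      using term_top[OF n4 M3 Sneg, of e P] \<open>e \<in> S\<close> unfolding V_def S_def by simp
  qed (use lt in auto)
  have "ltop (P e1 * (\<Prod>v\<in>V. kap v powi e1 v)) (dd n M e1) (\<lambda>s::'k. ?F (alp n M s) (bet n M s))"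
    using stop by (rule top_cong) (use rep in auto)
  hence "dd n M e1 = dd n M E" using top_unique ftop by blast
  hence e1E: "e1 = E" using dd_inj boxes e1(1) by blast
  have PE: "P E \<noteq> 0" using e1(1) e1E unfolding S_def by simp
  have less: "lex_less n e E" if "P e \<noteq> 0" "e \<noteq> E" for e
  proof -
    have eS: "e \<in> S" using that unfolding S_def by simp
    have "dd n M e < dd n M E" using lt[OF eS] that e1E by simp
    moreover have "lex_less n e E \<or> lex_less n E e" using lex_total boxes eS that(2) by blast
    ultimately show ?thesis using lex_mono[OF n4 K2] boxes eS by force
  qed
  have "lm n P = E"
    unfolding lm_def
  proof (rule the_equality)
    show "P E \<noteq> 0 \<and> (\<forall>e'. P e' \<noteq> 0 \<longrightarrow> e' \<noteq> E \<longrightarrow> lex_less n e' E)" using PE less by blast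
  next
    fix e assume e: "P e \<noteq> 0 \<and> (\<forall>e'. P e' \<noteq> 0 \<longrightarrow> e' \<noteq> e \<longrightarrow> lex_less n e' e)"
    show "e = E"
    proof (rule ccontr)
      assume "e \<noteq> E"
      hence "lex_less n E e" "lex_less n e E" using e PE less by auto
      thus False by (rule lex_asym)
    qed
  qed
  thus ?thesis unfolding E_def using estar_A[OF n4 assms(2,3)] by simp
qed

end
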